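(* Let $G_0$ be a group generated by two elements $x,y$ such that (1) $x^4=y^4=1$; (2) $[x,y]^2=[[x,y],x]^2=[[x,y],y]^2=1$; (3) $[[x,y],x]$ and $[[x,y],y]$ each commute with $x$ and with $y$. Then (a) $yx=xy[x,y]$, (b) $[x,y]x=x[x,y][[x,y],x]$, (c) $[x,y]y=y[x,y][[x,y],y]$, and $|G_0|\le128$. If in addition $y^2=1$, then $[[x,y],y]=1$ and $|G_0|\le 32$.
   Context: Commutators are $[\sigma,\tau]=\sigma^{-1}\tau^{-1}\sigma\tau$. *)

theory Defs
  imports "HOL-Algebra.Algebra"
begin

text \<open>Commutator convention of the paper: [s,t] = s^-1 t^-1 s t.\<close>
definition comm :: "('a, 'b) monoid_scheme \<Rightarrow> 'a \<Rightarrow> 'a \<Rightarrow> 'a" where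
  "comm G s t = inv\<^bsub>G\<^esub> s \<otimes>\<^bsub>G\<^esub> inv\<^bsub>G\<^esub> t \<otimes>\<^bsub>G\<^esub> s \<otimes>\<^bsub>G\<^esub> t"

end

theory Submission
  imports Defs
begin

lemma (in group) canc1: "g \<in> carrier G \<Longrightarrow> h \<in> carrier G \<Longrightarrow> g \<otimes> (inv g \<otimes> h) = h"
  by (simp add: m_assoc[symmetric])
lemma (in group) canc2: "g \<in> carrier G \<Longrightarrow> h \<in> carrier G \<Longrightarrow> inv g \<otimes> (g \<otimes> h) = h"
  by (simp add: m_assoc[symmetric])

lemma (in monoid) pow_mod:
  assumes "g \<in> carrier G" "g [^] (n::nat) = \<one>"
  shows "g [^] (i::nat) = g [^] (i mod n)"
proof -
  have "g [^] i = g [^] (n * (i div n) + i mod n)" by simp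
  also have "\<dots> = (g [^] n) [^] (i div n) \<otimes> g [^] (i mod n)"
    using assms(1) by (simp add: nat_pow_mult nat_pow_pow)
  also have "\<dots> = g [^] (i mod n)" using assms by simp
  finally show ?thesis .
qed

lemma (in monoid) central_pow:
  assumes "z \<in> carrier G" and zc: "\<And>h. h \<in> carrier G \<Longrightarrow> z \<otimes> h = h \<otimes> z"
    and "h \<in> carrier G"
  shows "z [^] (j::nat) \<otimes> h = h \<otimes> z [^] j"
proof (induction j)
  case 0 then show ?case using assms by simp
next
  case (Suc j)
  have "z [^] Suc j \<otimes> h = z [^] j \<otimes> (z \<otimes> h)" using assms by (simp add: m_assoc)
  also have "\<dots> = (z [^] j \<otimes> h) \<otimes> z" using assms zc by (simp add: m_assoc)
  also have "\<dots> = h \<otimes> z [^] Suc j" using assms Suc by (simp add: m_assoc)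
  finally show ?case .
qed

lemma (in group) pow_comm_gen:
  assumes "u \<in> carrier G" "g \<in> carrier G" "z \<in> carrier G"
    and zc: "\<And>h. h \<in> carrier G \<Longrightarrow> z \<otimes> h = h \<otimes> z"
    and r: "u \<otimes> g = g \<otimes> u \<otimes> z"
  shows "u \<otimes> g [^] (j::nat) = g [^] j \<otimes> u \<otimes> z [^] j"
proof (induction j)
  case 0 then show ?case using assms by simp
next
  case (Suc j)
  have "u \<otimes> g [^] Suc j = (u \<otimes> g [^] j) \<otimes> g" using assms by (simp add: m_assoc)
  also have "\<dots> = g [^] j \<otimes> u \<otimes> (z [^] j \<otimes> g)" using Suc assms by (simp add: m_assoc)
  also have "z [^] j \<otimes> g = g \<otimes> z [^] j" using central_pow[OF assms(3) zc] assms by blast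
  also have "g [^] j \<otimes> u \<otimes> (g \<otimes> z [^] j) = g [^] j \<otimes> (u \<otimes> g) \<otimes> z [^] j" using assms(1-3)
    by (simp add: m_assoc)
  also have "\<dots> = g [^] j \<otimes> (g \<otimes> u \<otimes> z) \<otimes> z [^] j" by (simp only: r)
  also have "\<dots> = g [^] j \<otimes> g \<otimes> u \<otimes> (z \<otimes> z [^] j)" using assms(1-3)
    by (simp add: m_assoc)
  also have "z \<otimes> z [^] j = z [^] j \<otimes> z" using central_pow[OF assms(3) zc, of z j] assms by simp
  also have "g [^] j \<otimes> g \<otimes> u \<otimes> (z [^] j \<otimes> z) = g [^] Suc j \<otimes> u \<otimes> z [^] Suc j"
    using assms by (simp add: m_assoc)
  finally show ?case .
qed

lemma (in group) comm_inv:
  assumes "g \<in> carrier G" "z \<in> carrier G" "z \<otimes> g = g \<otimes> z"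
  shows "z \<otimes> inv g = inv g \<otimes> z"
proof -
  have "z \<otimes> inv g = inv g \<otimes> (g \<otimes> z) \<otimes> inv g" using assms(1,2) by (simp add: m_assoc canc2)
  also have "\<dots> = inv g \<otimes> (z \<otimes> g) \<otimes> inv g" using assms by simp
  also have "\<dots> = inv g \<otimes> z" using assms(1,2) by (simp add: m_assoc)
  finally show ?thesis .
qed

lemma (in group) powpow_comm_gen:
  assumes "u \<in> carrier G" "g \<in> carrier G" "z \<in> carrier G"
    and zc: "\<And>h. h \<in> carrier G \<Longrightarrow> z \<otimes> h = h \<otimes> z"
    and r: "u \<otimes> g = g \<otimes> u \<otimes> z"
  shows "u [^] (k::nat) \<otimes> g [^] (j::nat) = g [^] j \<otimes> u [^] k \<otimes> z [^] (k * j)"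
proof (induction k)
  case 0 then show ?case using assms by simp
next
  case (Suc k)
  have "u [^] Suc k \<otimes> g [^] j = u \<otimes> (u [^] k \<otimes> g [^] j)" using assms(1-3) by (subst nat_pow_Suc2) (simp_all add: m_assoc)
  also have "\<dots> = (u \<otimes> g [^] j) \<otimes> (u [^] k \<otimes> z [^] (k * j))" using Suc assms(1-3) by (simp add: m_assoc)
  also have "\<dots> = g [^] j \<otimes> u \<otimes> (z [^] j \<otimes> u [^] k) \<otimes> z [^] (k * j)"
    using pow_comm_gen[OF assms, of j] assms(1-3) by (simp add: m_assoc)
  also have "z [^] j \<otimes> u [^] k = u [^] k \<otimes> z [^] j" using central_pow[OF assms(3) zc] assms by blast
  also have "g [^] j \<otimes> u \<otimes> (u [^] k \<otimes> z [^] j) \<otimes> z [^] (k * j) = g [^] j \<otimes> (u \<otimes> u [^] k) \<otimes> (z [^] j \<otimes> z [^] (k * j))"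
    using assms(1-3) by (simp add: m_assoc)
  also have "\<dots> = g [^] j \<otimes> u [^] Suc k \<otimes> z [^] (Suc k * j)"
    using assms(1-3) nat_pow_Suc2[of u k] by (simp add: nat_pow_mult nat_pow_Suc2 del: nat_pow_Suc)
  finally show ?case .
qed

locale P27 = group G for G (structure) +
  fixes x y c a b
  assumes xG: "x \<in> carrier G" and yG: "y \<in> carrier G"
    and gen: "generate G {x, y} = carrier G"
    and x4: "x [^] (4::nat) = \<one>" and y4: "y [^] (4::nat) = \<one>"
    and c_def: "c = comm G x y" and a_def: "a = comm G c x" and b_def: "b = comm G c y"
    and c2: "c [^] (2::nat) = \<one>" and a2: "a [^] (2::nat) = \<one>" and b2: "b [^] (2::nat) = \<one>"
    and ax: "a \<otimes> x = x \<otimes> a" and ay: "a \<otimes> y = y \<otimes> a"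
    and bx: "b \<otimes> x = x \<otimes> b" and by': "b \<otimes> y = y \<otimes> b"
begin

lemma cG: "c \<in> carrier G" using xG yG by (simp add: c_def comm_def)
lemma aG: "a \<in> carrier G" using xG cG by (simp add: a_def comm_def)
lemma bG: "b \<in> carrier G" using yG cG by (simp add: b_def comm_def)

lemma central:
  assumes zG: "z \<in> carrier G" and zx: "z \<otimes> x = x \<otimes> z" and zy: "z \<otimes> y = y \<otimes> z"
    and hG: "h \<in> carrier G"
  shows "z \<otimes> h = h \<otimes> z"
proof -
  have "h \<in> generate G {x, y}" using hG gen by simp
  then show ?thesis
  proof (induction h rule: generate.induct)
    case one then show ?case using zG by simp
  next
    case (incl h) then show ?case using zx zy by auto
  next
    case (inv h) then show ?case using zx zy comm_inv[OF xG zG] comm_inv[OF yG zG] by auto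
  next
    case (eng h1 h2)
    have g1: "h1 \<in> carrier G" "h2 \<in> carrier G" using eng.hyps gen by auto
    have "z \<otimes> (h1 \<otimes> h2) = (z \<otimes> h1) \<otimes> h2" using g1 zG by (simp add: m_assoc)
    also have "\<dots> = h1 \<otimes> (z \<otimes> h2)" using eng.IH g1 zG by (simp add: m_assoc)
    also have "\<dots> = (h1 \<otimes> h2) \<otimes> z" using eng.IH g1 zG by (simp add: m_assoc)
    finally show ?case .
  qed
qed

lemma ac: "h \<in> carrier G \<Longrightarrow> a \<otimes> h = h \<otimes> a" using central[OF aG ax ay] .
lemma bc: "h \<in> carrier G \<Longrightarrow> b \<otimes> h = h \<otimes> b" using central[OF bG bx by'] .

lemma acp: "h \<in> carrier G \<Longrightarrow> a [^] (n::nat) \<otimes> h = h \<otimes> a [^] n" using central_pow[OF aG ac] .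
lemma bcp: "h \<in> carrier G \<Longrightarrow> b [^] (n::nat) \<otimes> h = h \<otimes> b [^] n" using central_pow[OF bG bc] .

lemma cc: "c \<otimes> c = \<one>" using c2 cG by (simp add: numeral_2_eq_2)
lemma cinv: "inv c = c" using cc cG inv_equality by blast

lemma yx: "y \<otimes> x = x \<otimes> y \<otimes> c"
proof -
  have "y \<otimes> x \<otimes> c = x \<otimes> y" using xG yG by (simp add: c_def comm_def m_assoc canc1)
  then have "y \<otimes> x \<otimes> c \<otimes> c = x \<otimes> y \<otimes> c" by simp
  then show ?thesis using xG yG cG cc by (simp add: m_assoc)
qed

lemma cx: "c \<otimes> x = x \<otimes> c \<otimes> a"
  using xG cG by (simp add: a_def comm_def m_assoc canc1)
lemma cy: "c \<otimes> y = y \<otimes> c \<otimes> b"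
  using yG cG by (simp add: b_def comm_def m_assoc canc1)

lemma cxi: "c \<otimes> x [^] (i::nat) = x [^] i \<otimes> c \<otimes> a [^] i"
  using pow_comm_gen[OF cG xG aG ac cx] .
lemma ckyj: "c [^] (k::nat) \<otimes> y [^] (j::nat) = y [^] j \<otimes> c [^] k \<otimes> b [^] (k * j)"
  using powpow_comm_gen[OF cG yG bG bc cy] .

definition e :: "nat \<Rightarrow> nat" where "e i = (\<Sum>t<i. t)"

lemma yxi: "y \<otimes> x [^] (i::nat) = x [^] i \<otimes> y \<otimes> c [^] i \<otimes> a [^] e i"
proof (induction i)
  case 0 then show ?case using yG by (simp add: e_def)
next
  case (Suc i)
  have "y \<otimes> x [^] Suc i = (y \<otimes> x [^] i) \<otimes> x" using xG yG by (simp add: m_assoc)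
  also have "\<dots> = x [^] i \<otimes> y \<otimes> (c [^] i \<otimes> x) \<otimes> a [^] e i"
    using Suc xG yG cG aG acp[OF xG] by (simp add: m_assoc)
  also have "c [^] i \<otimes> x = x \<otimes> c [^] i \<otimes> a [^] i"
    using powpow_comm_gen[OF cG xG aG ac cx, of i 1] xG by simp
  also have "x [^] i \<otimes> y \<otimes> (x \<otimes> c [^] i \<otimes> a [^] i) \<otimes> a [^] e i
      = x [^] i \<otimes> (y \<otimes> x) \<otimes> c [^] i \<otimes> (a [^] i \<otimes> a [^] e i)"
    using xG yG cG aG by (simp add: m_assoc)
  also have "\<dots> = x [^] i \<otimes> (x \<otimes> y \<otimes> c) \<otimes> c [^] i \<otimes> (a [^] i \<otimes> a [^] e i)"
    by (simp only: yx)
  also have "\<dots> = (x [^] i \<otimes> x) \<otimes> y \<otimes> (c \<otimes> c [^] i) \<otimes> (a [^] i \<otimes> a [^] e i)"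
    using xG yG cG aG by (simp add: m_assoc)
  also have "\<dots> = x [^] Suc i \<otimes> y \<otimes> c [^] Suc i \<otimes> a [^] e (Suc i)"
    using xG yG cG aG nat_pow_Suc2[of c i] by (simp add: nat_pow_mult e_def add.commute)
  finally show ?case .
qed

definition nf :: "nat \<Rightarrow> nat \<Rightarrow> nat \<Rightarrow> nat \<Rightarrow> nat \<Rightarrow> 'a" where
  "nf i j k l m = x [^] i \<otimes> y [^] j \<otimes> c [^] k \<otimes> a [^] l \<otimes> b [^] m"

lemma nfG: "nf i j k l m \<in> carrier G"
  using xG yG cG aG bG by (simp add: nf_def)

lemma x_nf: "x \<otimes> nf i j k l m = nf (Suc i) j k l m"
proof -
  have "x \<otimes> nf i j k l m = (x \<otimes> x [^] i) \<otimes> y [^] j \<otimes> c [^] k \<otimes> a [^] l \<otimes> b [^] m"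
    using xG yG cG aG bG by (simp add: nf_def m_assoc)
  also have "x \<otimes> x [^] i = x [^] Suc i" by (rule nat_pow_Suc2[OF xG, symmetric])
  finally show ?thesis by (simp only: nf_def)
qed

lemma y_nf: "y \<otimes> nf i j k l m = nf i (Suc j) (i + k) (e i + l) (i * j + m)"
proof -
  have "y \<otimes> nf i j k l m = (y \<otimes> x [^] i) \<otimes> y [^] j \<otimes> c [^] k \<otimes> a [^] l \<otimes> b [^] m"
    using xG yG cG aG bG by (simp add: nf_def m_assoc)
  also have "\<dots> = x [^] i \<otimes> y \<otimes> c [^] i \<otimes> (a [^] e i \<otimes> y [^] j) \<otimes> c [^] k \<otimes> a [^] l \<otimes> b [^] m"
    using xG yG cG aG bG by (simp add: yxi m_assoc)
  also have "a [^] e i \<otimes> y [^] j = y [^] j \<otimes> a [^] e i" using acp yG by simp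
  also have "x [^] i \<otimes> y \<otimes> c [^] i \<otimes> (y [^] j \<otimes> a [^] e i) \<otimes> c [^] k \<otimes> a [^] l \<otimes> b [^] m
     = x [^] i \<otimes> y \<otimes> (c [^] i \<otimes> y [^] j) \<otimes> (a [^] e i \<otimes> c [^] k) \<otimes> a [^] l \<otimes> b [^] m"
    using xG yG cG aG bG by (simp add: m_assoc)
  also have "a [^] e i \<otimes> c [^] k = c [^] k \<otimes> a [^] e i" using acp cG by simp
  also have "c [^] i \<otimes> y [^] j = y [^] j \<otimes> c [^] i \<otimes> b [^] (i * j)" by (rule ckyj)
  also have "x [^] i \<otimes> y \<otimes> (y [^] j \<otimes> c [^] i \<otimes> b [^] (i * j)) \<otimes> (c [^] k \<otimes> a [^] e i) \<otimes> a [^] l \<otimes> b [^] m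
     = x [^] i \<otimes> (y \<otimes> y [^] j) \<otimes> c [^] i \<otimes> (b [^] (i * j) \<otimes> (c [^] k \<otimes> (a [^] e i \<otimes> a [^] l))) \<otimes> b [^] m"
    using xG yG cG aG bG by (simp add: m_assoc)
  also have "b [^] (i * j) \<otimes> (c [^] k \<otimes> (a [^] e i \<otimes> a [^] l)) = c [^] k \<otimes> (a [^] e i \<otimes> a [^] l) \<otimes> b [^] (i * j)"
    using bcp cG aG by simp
  also have "x [^] i \<otimes> (y \<otimes> y [^] j) \<otimes> c [^] i \<otimes> (c [^] k \<otimes> (a [^] e i \<otimes> a [^] l) \<otimes> b [^] (i * j)) \<otimes> b [^] m
     = x [^] i \<otimes> (y \<otimes> y [^] j) \<otimes> (c [^] i \<otimes> c [^] k) \<otimes> (a [^] e i \<otimes> a [^] l) \<otimes> (b [^] (i * j) \<otimes> b [^] m)"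
    using xG yG cG aG bG by (simp add: m_assoc)
  also have "\<dots> = nf i (Suc j) (i + k) (e i + l) (i * j + m)"
    using xG yG cG aG bG nat_pow_Suc2[of y j] by (simp add: nat_pow_mult nf_def)
  finally show ?thesis .
qed

lemma nf_mod: "nf i j k l m = nf (i mod 4) (j mod 4) (k mod 2) (l mod 2) (m mod 2)"
proof -
  note e = pow_mod[OF xG x4, of i] pow_mod[OF yG y4, of j] pow_mod[OF cG c2, of k]
    pow_mod[OF aG a2, of l] pow_mod[OF bG b2, of m]
  show ?thesis unfolding nf_def by (simp only: e)
qed

definition S where "S = (\<lambda>(i,j,k,l,m). nf i j k l m) ` ({..<4} \<times> {..<4} \<times> {..<2} \<times> {..<2} \<times> {..<2})"

lemma nf_S: "nf i j k l m \<in> S"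
  unfolding S_def
  by (subst nf_mod, rule image_eqI[where x="(i mod 4, j mod 4, k mod 2, l mod 2, m mod 2)"]) auto

lemma S_sub: "S \<subseteq> carrier G" unfolding S_def using nfG by auto

lemma finS: "finite S" and cardS: "card S \<le> 128"
proof -
  show "finite S" unfolding S_def by simp
  have "card S \<le> card ({..<4::nat} \<times> {..<4::nat} \<times> {..<2::nat} \<times> {..<2::nat} \<times> {..<2::nat})"
    unfolding S_def by (rule card_image_le) simp
  then show "card S \<le> 128" by (simp add: card_cartesian_product)
qed

lemma xinv: "inv x = x [^] (3::nat)"
proof -
  have "x [^] (3::nat) \<otimes> x = \<one>" using x4 xG by (simp add: numeral_eq_Suc)
  then show ?thesis using xG inv_equality by simp
qed
lemma yinv: "inv y = y [^] (3::nat)"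
proof -
  have "y [^] (3::nat) \<otimes> y = \<one>" using y4 yG by (simp add: numeral_eq_Suc)
  then show ?thesis using yG inv_equality by simp
qed

lemma xS: assumes "s \<in> S" shows "x \<otimes> s \<in> S"
proof -
  obtain i j k l m where "s = nf i j k l m" using assms unfolding S_def by auto
  then show ?thesis using x_nf nf_S by simp
qed
lemma yS: assumes "s \<in> S" shows "y \<otimes> s \<in> S"
proof -
  obtain i j k l m where "s = nf i j k l m" using assms unfolding S_def by auto
  then show ?thesis using y_nf nf_S by simp
qed

lemma carrier_S: "carrier G \<subseteq> S"
proof -
  have "\<forall>s\<in>S. h \<otimes> s \<in> S" if "h \<in> generate G {x, y}" for h
    using that
  proof (induction h rule: generate.induct)
    case one then show ?case using S_sub by auto
  next
    case (incl h) then show ?case using xS yS by auto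
  next
    case (inv h)
    have p3: "g [^] (3::nat) = g \<otimes> (g \<otimes> g)" if "g \<in> carrier G" for g
      using that by (simp add: numeral_eq_Suc m_assoc)
    have "x [^] (3::nat) \<otimes> s \<in> S" "y [^] (3::nat) \<otimes> s \<in> S" if "s \<in> S" for s
    proof -
      have sG: "s \<in> carrier G" using that S_sub by auto
      show "x [^] (3::nat) \<otimes> s \<in> S" unfolding p3[OF xG] using sG xG xS[OF xS[OF xS[OF that]]] by (simp add: m_assoc)
      show "y [^] (3::nat) \<otimes> s \<in> S" unfolding p3[OF yG] using sG yG yS[OF yS[OF yS[OF that]]] by (simp add: m_assoc)
    qed
    then show ?case using inv xinv yinv by auto
  next
    case (eng h1 h2)
    have g1: "h1 \<in> carrier G" "h2 \<in> carrier G" using eng.hyps gen by auto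
    show ?case
    proof
      fix s assume s: "s \<in> S"
      then have "h2 \<otimes> s \<in> S" using eng.IH(2) by blast
      then have "h1 \<otimes> (h2 \<otimes> s) \<in> S" using eng.IH(1) by blast
      moreover have "s \<in> carrier G" using s S_sub by auto
      ultimately show "h1 \<otimes> h2 \<otimes> s \<in> S" using g1 by (simp add: m_assoc)
    qed
  qed
  moreover have "nf 0 0 0 0 0 = \<one>" by (simp add: nf_def)
  ultimately show ?thesis
  proof -
    assume H: "\<And>h. h \<in> generate G {x, y} \<Longrightarrow> \<forall>s\<in>S. h \<otimes> s \<in> S" and n0: "nf 0 0 0 0 0 = \<one>"
    show ?thesis
    proof
      fix g assume g: "g \<in> carrier G"
      have "\<one> \<in> S" using nf_S[of 0 0 0 0 0] n0 by simp
      then have "g \<otimes> \<one> \<in> S" using H g gen by blast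
      then show "g \<in> S" using g by simp
    qed
  qed
qed

lemma finC: "finite (carrier G)" using carrier_S finS finite_subset by blast
lemma card128: "card (carrier G) \<le> 128" using carrier_S finS cardS card_mono le_trans by blast

lemma b1: assumes y2: "y [^] (2::nat) = \<one>" shows "b = \<one>"
proof -
  have yy: "y \<otimes> y = \<one>" using y2 yG by (simp add: numeral_2_eq_2)
  have yi: "inv y = y" using yy yG inv_equality by blast
  have 1: "inv y \<otimes> c \<otimes> y = y \<otimes> inv x \<otimes> y \<otimes> x"
    using xG yG yy by (simp add: c_def comm_def yi m_assoc)
  have 2: "inv c = y \<otimes> inv x \<otimes> y \<otimes> x"
    using xG yG by (simp add: c_def comm_def inv_mult_group m_assoc yi)
  have "b = inv c \<otimes> (inv y \<otimes> c \<otimes> y)" using xG yG cG by (simp add: b_def comm_def m_assoc)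
  also have "\<dots> = inv c \<otimes> c" using 1 2 cinv by simp
  finally show ?thesis using cG by simp
qed

lemma card32: assumes y2: "y [^] (2::nat) = \<one>" shows "card (carrier G) \<le> 32"
proof -
  define S2 where "S2 = (\<lambda>(i,j,k,l). nf i j k l 0) ` ({..<4::nat} \<times> {..<2::nat} \<times> {..<2::nat} \<times> {..<2::nat})"
  have e: "nf i j k l m = nf i (j mod 2) k l 0" for i j k l m
    unfolding nf_def using b1[OF y2] pow_mod[OF yG y2, of j] by simp
  have "S \<subseteq> S2"
  proof
    fix s assume "s \<in> S"
    then obtain i j k l m where s: "s = nf i j k l m" "i < 4" "k < 2" "l < 2" unfolding S_def by auto
    show "s \<in> S2" unfolding S2_def
      by (rule image_eqI[where x="(i, j mod 2, k, l)"]) (use s e[of i j k l m] in auto)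
  qed
  have "card S2 \<le> card ({..<4::nat} \<times> {..<2::nat} \<times> {..<2::nat} \<times> {..<2::nat})"
    unfolding S2_def by (rule card_image_le) simp
  then have "card S2 \<le> 32" by (simp add: card_cartesian_product)
  moreover have "finite S2" unfolding S2_def by simp
  ultimately have "card (carrier G) \<le> card S2" using carrier_S \<open>S \<subseteq> S2\<close> card_mono
    by (meson order_trans)
  with \<open>card S2 \<le> 32\<close> show ?thesis by linarith
qed

end

theorem proposition2p7:
  fixes G (structure) and x y :: 'a
  assumes grp: "group G"
    and xG: "x \<in> carrier G" and yG: "y \<in> carrier G"
    and gen: "generate G {x, y} = carrier G"
    and x4: "x [^] (4::nat) = \<one>" and y4: "y [^] (4::nat) = \<one>"
    and c2: "comm G x y [^] (2::nat) = \<one>"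
    and cx2: "comm G (comm G x y) x [^] (2::nat) = \<one>"
    and cy2: "comm G (comm G x y) y [^] (2::nat) = \<one>"
    and cx_x: "comm G (comm G x y) x \<otimes> x = x \<otimes> comm G (comm G x y) x"
    and cx_y: "comm G (comm G x y) x \<otimes> y = y \<otimes> comm G (comm G x y) x"
    and cy_x: "comm G (comm G x y) y \<otimes> x = x \<otimes> comm G (comm G x y) y"
    and cy_y: "comm G (comm G x y) y \<otimes> y = y \<otimes> comm G (comm G x y) y"
  shows "y \<otimes> x = x \<otimes> y \<otimes> comm G x y
       \<and> comm G x y \<otimes> x = x \<otimes> comm G x y \<otimes> comm G (comm G x y) x
       \<and> comm G x y \<otimes> y = y \<otimes> comm G x y \<otimes> comm G (comm G x y) y
       \<and> finite (carrier G) \<and> card (carrier G) \<le> 128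
       \<and> (y [^] (2::nat) = \<one> \<longrightarrow>
            comm G (comm G x y) y = \<one> \<and> card (carrier G) \<le> 32)"
proof -
  interpret P: P27 G x y "comm G x y" "comm G (comm G x y) x" "comm G (comm G x y) y"
    by (rule P27.intro[OF grp], rule P27_axioms.intro) (use assms in simp_all)
  have "y \<otimes> x = x \<otimes> y \<otimes> comm G x y" by (rule P.yx)
  moreover have "comm G x y \<otimes> x = x \<otimes> comm G x y \<otimes> comm G (comm G x y) x" by (rule P.cx)
  moreover have "comm G x y \<otimes> y = y \<otimes> comm G x y \<otimes> comm G (comm G x y) y" by (rule P.cy)
  moreover note P.finC P.card128
  moreover have "y [^] (2::nat) = \<one> \<longrightarrow> comm G (comm G x y) y = \<one> \<and> card (carrier G) \<le> 32"
    using P.b1 P.card32 by simp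
  ultimately show ?thesis by (intro conjI)
qed

end
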